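(* Let $\lambda_{\max}>1$ and let $F:[0,\lambda_{\max}]\to\mathbb{R}_+$ be continuously differentiable with $F(0)=0$, such that $F(x)<F^\star$ for all $x\in[0,1)$ and $F'(1)>0$. Suppose $x_1^\star\in(1,\lambda_{\max}]$, $x_2^\star\in[0,1)$, $p^\star\in(0,1)$ are such that the measure $\alpha(\{x_1^\star\})=p^\star$, $\alpha(\{x_2^\star\})=1-p^\star$ is an optimal solution of the problem defining $F^\star$. Then for all $x\in[0,\lambda_{\max}]$, $$F(x)\le\frac{F(x_1^\star)-F(x_2^\star)}{x_1^\star-x_2^\star}\,x+\frac{x_1^\star F(x_2^\star)-x_2^\star F(x_1^\star)}{x_1^\star-x_2^\star}.$$
   Context: $F^\star=\sup\{\mathbb{E}_\alpha[F(X)]:\alpha$ a probability measure on $[0,\lambda_{\max}]$, $X\sim\alpha$, $\mathbb{E}_\alpha[X]\le1\}$. *)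

theory Defs
  imports "HOL-Probability.Probability"
begin

definition feasible_measure :: "real \<Rightarrow> real measure \<Rightarrow> bool" where
  "feasible_measure lmax M \<longleftrightarrow>
     prob_space M \<and> sets M = sets borel \<and>
     (AE x in M. x \<in> {0..lmax}) \<and> integral\<^sup>L M (\<lambda>x. x) \<le> 1"

definition Fstar :: "real \<Rightarrow> (real \<Rightarrow> real) \<Rightarrow> real" where
  "Fstar lmax F = Sup {integral\<^sup>L M F | M. feasible_measure lmax M}"

end

theory Submission
  imports Defs
begin

lemma two_point:
  fixes F :: "real \<Rightarrow> real"
  assumes a: "a \<in> {0..lmax}" and b: "b \<in> {0..lmax}" and q: "0 \<le> q" "q \<le> 1"
    and mean: "q*a + (1-q)*b \<le> 1" and Fm: "F \<in> borel_measurable borel"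
  shows "\<exists>M. feasible_measure lmax M \<and> integral\<^sup>L M F = q * F a + (1-q) * F b"
proof -
  define g where "g = (\<lambda>c::bool. if c then a else b)"
  define M where "M = distr (measure_pmf (bernoulli_pmf q)) borel g"
  have gm: "g \<in> measurable (measure_pmf (bernoulli_pmf q)) borel" by simp
  have int: "integral\<^sup>L M f = q * f a + (1-q) * f b" if "f \<in> borel_measurable borel" for f :: "real \<Rightarrow> real"
  proof -
    have "integral\<^sup>L M f = (\<integral>c. f (g c) \<partial>measure_pmf (bernoulli_pmf q))"
      unfolding M_def by (rule integral_distr[OF gm that])
    also have "\<dots> = (\<Sum>c\<in>UNIV. f (g c) * pmf (bernoulli_pmf q) c)"
      by (rule integral_measure_pmf_real) auto
    also have "\<dots> = q * f a + (1-q) * f b"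
      using q by (simp add: UNIV_bool g_def)
    finally show ?thesis .
  qed
  have "prob_space M" unfolding M_def
    by (rule prob_space.prob_space_distr[OF _ gm]) (rule prob_space_measure_pmf)
  moreover have "sets M = sets borel" unfolding M_def by simp
  moreover have "AE x in M. x \<in> {0..lmax}"
    unfolding M_def
    apply (subst AE_distr_iff[OF gm])
    using a b by (auto simp: g_def)
  moreover have "integral\<^sup>L M (\<lambda>x. x) \<le> 1" using int[of "\<lambda>x. x"] mean by simp
  ultimately show ?thesis using int[OF Fm] unfolding feasible_measure_def by blast
qed


theorem lemmaB1:
  fixes lmax :: real and F F' :: "real \<Rightarrow> real" and x1 x2 p :: real
  assumes lmax: "lmax > 1"
    and F_nonneg: "\<forall>x\<in>{0..lmax}. F x \<ge> 0"
    and F_deriv: "\<forall>x\<in>{0..lmax}. (F has_real_derivative F' x) (at x within {0..lmax})"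
    and F'_cont: "continuous_on {0..lmax} F'"
    and F0: "F 0 = 0"
    and below: "\<forall>x\<in>{0..<1}. F x < Fstar lmax F"
    and F'1: "F' 1 > 0"
    and x1: "x1 \<in> {1<..lmax}" and x2: "x2 \<in> {0..<1}" and p: "p \<in> {0<..<1}"
    and feas: "p * x1 + (1 - p) * x2 \<le> 1"
    and opt: "p * F x1 + (1 - p) * F x2 = Fstar lmax F"
  shows "\<forall>x\<in>{0..lmax}.
    F x \<le> (F x1 - F x2) / (x1 - x2) * x + (x1 * F x2 - x2 * F x1) / (x1 - x2)"
proof -
  define S where "S = {integral\<^sup>L M F | M. feasible_measure lmax M}"
  have FS: "Fstar lmax F = Sup S" unfolding S_def Fstar_def ..
  have feas0: "feasible_measure lmax (return borel 0)"
    unfolding feasible_measure_def using lmax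
    by (auto simp: prob_space_return AE_return integral_return)
  have Fm: "F \<in> borel_measurable borel"
  proof (rule ccontr)
    assume nm: "F \<notin> borel_measurable borel"
    have "S = {0}"
    proof -
      have "integral\<^sup>L M F = 0" if "feasible_measure lmax M" for M
      proof -
        have "sets M = sets borel" using that unfolding feasible_measure_def by auto
        hence "\<not> integrable M F" using nm
          by (metis borel_measurable_integrable measurable_cong_sets)
        thus ?thesis by (rule not_integrable_integral_eq)
      qed
      thus ?thesis unfolding S_def using feas0 by (auto intro!: exI[of _ "return borel 0"])
    qed
    hence "Fstar lmax F = 0" using FS by simp
    thus False using below F0 by (metis atLeastLessThan_iff less_irrefl zero_less_one order_refl)
  qed
  have contF: "continuous_on {0..lmax} F"
    unfolding continuous_on_eq_continuous_within
    using F_deriv by (metis has_derivative_continuous has_field_derivative_def)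
  have "bounded (F ` {0..lmax})"
    by (rule compact_imp_bounded, rule compact_continuous_image[OF contF]) simp
  then obtain B where B: "\<forall>x\<in>{0..lmax}. \<bar>F x\<bar> \<le> B"
    unfolding bounded_iff by auto
  have B0: "0 \<le> B" using B lmax by force
  have bdd: "bdd_above S"
    unfolding bdd_above_def
  proof (intro exI ballI)
    fix y assume "y \<in> S"
    then obtain M where M: "feasible_measure lmax M" and y: "y = integral\<^sup>L M F"
      unfolding S_def by auto
    interpret prob_space M using M unfolding feasible_measure_def by auto
    show "y \<le> B"
    proof (cases "integrable M F")
      case True
      have "integral\<^sup>L M F \<le> integral\<^sup>L M (\<lambda>_. B)"
      proof (rule integral_mono_AE[OF True])
        show "integrable M (\<lambda>_. B)" by simp
        have "AE x in M. x \<in> {0..lmax}" using M unfolding feasible_measure_def by auto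
        thus "AE x in M. F x \<le> B" by eventually_elim (use B in force)
      qed
      thus ?thesis using y by (simp add: prob_space)
    next
      case False
      thus ?thesis using y B0 not_integrable_integral_eq[OF False] by simp
    qed
  qed
  have upper: "integral\<^sup>L M F \<le> Fstar lmax F" if "feasible_measure lmax M" for M
    unfolding FS by (rule cSup_upper[OF _ bdd]) (use that S_def in auto)
  define L where "L = (\<lambda>x. (F x1 - F x2) / (x1 - x2) * x + (x1 * F x2 - x2 * F x1) / (x1 - x2))"
  have ne: "x1 - x2 \<noteq> 0" using x1 x2 by auto
  have Laff: "L (t * a + (1 - t) * b) = t * L a + (1 - t) * L b" for t a b
  proof -
    define sl where "sl = (F x1 - F x2) / (x1 - x2)"
    define c where "c = (x1 * F x2 - x2 * F x1) / (x1 - x2)"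
    have "L = (\<lambda>x. sl * x + c)" unfolding L_def sl_def c_def ..
    thus ?thesis by (simp add: algebra_simps)
  qed
  have L1: "L x1 = F x1"
  proof -
    have "L x1 = ((F x1 - F x2) * x1 + (x1 * F x2 - x2 * F x1)) / (x1 - x2)"
      unfolding L_def by (simp add: add_divide_distrib)
    also have "(F x1 - F x2) * x1 + (x1 * F x2 - x2 * F x1) = F x1 * (x1 - x2)"
      by (simp add: algebra_simps)
    finally show ?thesis using ne by simp
  qed
  have L2: "L x2 = F x2"
  proof -
    have "L x2 = ((F x1 - F x2) * x2 + (x1 * F x2 - x2 * F x1)) / (x1 - x2)"
      unfolding L_def by (simp add: add_divide_distrib)
    also have "(F x1 - F x2) * x2 + (x1 * F x2 - x2 * F x1) = F x2 * (x1 - x2)"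
      by (simp add: algebra_simps)
    finally show ?thesis using ne by simp
  qed
  define m where "m = p * x1 + (1 - p) * x2"
  have Lm: "L m = Fstar lmax F" unfolding m_def Laff L1 L2 opt ..
  have e1: "m - x2 = p * (x1 - x2)" "x1 - m = (1 - p) * (x1 - x2)"
    unfolding m_def by (simp_all add: algebra_simps)
  have g1: "p * (x1 - x2) > 0" "(1 - p) * (x1 - x2) > 0" using p x1 x2 by auto
  have mlt: "x2 < m" "m < x1" using e1 g1 by (metis diff_gt_0_iff_gt)+
  show ?thesis
  proof (rule ccontr)
    assume "\<not> ?thesis"
    then obtain x0 where x0: "x0 \<in> {0..lmax}" and gt: "F x0 > L x0"
      unfolding L_def by force
    show False
    proof (cases "x0 < m")
      case True
      define q where "q = (x1 - m) / (x1 - x0)"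
      have q: "0 < q" "q \<le> 1" using True mlt unfolding q_def by (auto simp: field_simps)
      have "q * (x1 - x0) = x1 - m" using True mlt unfolding q_def by simp
      moreover have "q * x0 + (1 - q) * x1 = x1 - q * (x1 - x0)" by (simp add: algebra_simps)
      ultimately have mq: "q * x0 + (1 - q) * x1 = m" by simp
      obtain M where M: "feasible_measure lmax M" and I: "integral\<^sup>L M F = q * F x0 + (1-q) * F x1"
        using two_point[OF x0 _ _ _ _ Fm, of x1 q] x1 q mq feas unfolding m_def by auto
      have "q * F x0 + (1-q) * F x1 > q * L x0 + (1-q) * L x1"
        using gt q L1 by simp
      also have "q * L x0 + (1-q) * L x1 = Fstar lmax F" using Laff[symmetric] mq Lm by simp
      finally show False using upper[OF M] I by simp
    next
      case False
      define q where "q = (m - x2) / (x0 - x2)"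
      have q: "0 < q" "q \<le> 1" using False mlt unfolding q_def by (auto simp: field_simps)
      have "q * (x0 - x2) = m - x2" using False mlt unfolding q_def by simp
      moreover have "q * x0 + (1 - q) * x2 = x2 + q * (x0 - x2)" by (simp add: algebra_simps)
      ultimately have mq: "q * x0 + (1 - q) * x2 = m" by simp
      obtain M where M: "feasible_measure lmax M" and I: "integral\<^sup>L M F = q * F x0 + (1-q) * F x2"
        using two_point[OF x0 _ _ _ _ Fm, of x2 q] x2 x1 q mq feas unfolding m_def by auto
      have "q * F x0 + (1-q) * F x2 > q * L x0 + (1-q) * L x2"
        using gt q L2 by simp
      also have "q * L x0 + (1-q) * L x2 = Fstar lmax F" using Laff[symmetric] mq Lm by simp
      finally show False using upper[OF M] I by simp
    qed
  qed
qed

end
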